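(* Let $\pi_i:(X_i,T_i)\to(Y_i,S_i)$, $i=1,2$, be factor maps between topological dynamical systems. If both $\pi_1$ and $\pi_2$ are proximal, then the product map $\pi_1\times\pi_2:(X_1\times X_2,T_1\times T_2)\to(Y_1\times Y_2,S_1\times S_2)$ is proximal.
   Context: Systems: compact metric space with continuous surjection; factor map: continuous surjection intertwining the maps. A pair $x,y$ is proximal if $\liminf_{n\to\infty}\varrho(T^nx,T^ny)=0$. A factor map $\pi$ is proximal if every pair $x_1,x_2$ with $\pi(x_1)=\pi(x_2)$ is proximal. *)

theory Defs
  imports "HOL-Analysis.Analysis"
begin

definition tds :: "'a::metric_space set \<Rightarrow> ('a \<Rightarrow> 'a) \<Rightarrow> bool" where
  "tds X T \<longleftrightarrow> compact X \<and> continuous_on X T \<and> T ` X = X"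

definition factor_map ::
  "'a::metric_space set \<Rightarrow> ('a \<Rightarrow> 'a) \<Rightarrow> 'b::metric_space set \<Rightarrow> ('b \<Rightarrow> 'b) \<Rightarrow> ('a \<Rightarrow> 'b) \<Rightarrow> bool" where
  "factor_map X T Y S \<pi> \<longleftrightarrow> tds X T \<and> tds Y S \<and> continuous_on X \<pi> \<and> \<pi> ` X = Y \<and>
     (\<forall>x\<in>X. \<pi> (T x) = S (\<pi> x))"

definition proximal_pair :: "('a::metric_space \<Rightarrow> 'a) \<Rightarrow> 'a \<Rightarrow> 'a \<Rightarrow> bool" where
  "proximal_pair T x y \<longleftrightarrow> liminf (\<lambda>n. ereal (dist ((T ^^ n) x) ((T ^^ n) y))) = 0"

definition proximal_factor ::
  "'a::metric_space set \<Rightarrow> ('a \<Rightarrow> 'a) \<Rightarrow> ('a \<Rightarrow> 'b) \<Rightarrow> bool" where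
  "proximal_factor X T \<pi> \<longleftrightarrow>
     (\<forall>x1\<in>X. \<forall>x2\<in>X. \<pi> x1 = \<pi> x2 \<longrightarrow> proximal_pair T x1 x2)"

definition prod_map :: "('a \<Rightarrow> 'c) \<Rightarrow> ('b \<Rightarrow> 'd) \<Rightarrow> 'a \<times> 'b \<Rightarrow> 'c \<times> 'd" where
  "prod_map f g = (\<lambda>(x, y). (f x, g y))"

end

theory Submission
  imports Defs
begin

lemma prox_iff:
  "proximal_pair T x y \<longleftrightarrow> (\<forall>e>0. \<forall>N. \<exists>n\<ge>N. dist ((T^^n) x) ((T^^n) y) < e)"
proof -
  let ?f = "\<lambda>n. ereal (dist ((T ^^ n) x) ((T ^^ n) y))"
  have I0: "(INF m\<in>{n..}. ?f m) \<ge> 0" for n by (auto intro!: INF_greatest)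
  have "proximal_pair T x y \<longleftrightarrow> (SUP n. INF m\<in>{n..}. ?f m) = 0"
    unfolding proximal_pair_def liminf_SUP_INF by simp
  also have "\<dots> \<longleftrightarrow> (\<forall>n. (INF m\<in>{n..}. ?f m) = 0)"
    using I0 by (metis (no_types, lifting) SUP_le_iff SUP_upper antisym_conv order.trans UNIV_I)
  also have "\<dots> \<longleftrightarrow> (\<forall>n. \<forall>e>0. \<exists>m\<ge>n. dist ((T^^m) x) ((T^^m) y) < e)"
  proof (intro iff_allI)
    fix n
    show "(INF m\<in>{n..}. ?f m) = 0 \<longleftrightarrow> (\<forall>e>0. \<exists>m\<ge>n. dist ((T^^m) x) ((T^^m) y) < e)"
    proof
      assume h: "(INF m\<in>{n..}. ?f m) = 0"
      show "\<forall>e>0. \<exists>m\<ge>n. dist ((T^^m) x) ((T^^m) y) < e"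
      proof (intro allI impI)
        fix e :: real assume "e > 0"
        then have "(INF m\<in>{n..}. ?f m) < ereal e" using h by simp
        then show "\<exists>m\<ge>n. dist ((T^^m) x) ((T^^m) y) < e" by (auto simp: INF_less_iff)
      qed
    next
      assume h: "\<forall>e>0. \<exists>m\<ge>n. dist ((T^^m) x) ((T^^m) y) < e"
      have "(INF m\<in>{n..}. ?f m) \<le> 0"
      proof (rule ereal_le_epsilon2)
        fix e :: real assume "e > 0"
        then obtain m where "m \<ge> n" "dist ((T^^m) x) ((T^^m) y) < e" using h by blast
        then have "(INF m\<in>{n..}. ?f m) \<le> ?f m" by (intro INF_lower) auto
        also have "\<dots> \<le> 0 + ereal e" using \<open>dist _ _ < e\<close> by simp
        finally show "(INF m\<in>{n..}. ?f m) \<le> 0 + ereal e" .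
      qed
      then show "(INF m\<in>{n..}. ?f m) = 0" using I0[of n] by simp
    qed
  qed
  finally show ?thesis by blast
qed

lemma iter_in: "tds X T \<Longrightarrow> x \<in> X \<Longrightarrow> (T^^n) x \<in> X"
  by (induction n) (auto simp: tds_def)

lemma iter_cont: "tds X T \<Longrightarrow> continuous_on X (T^^n)"
proof (induction n)
  case 0 then show ?case by (simp add: continuous_on_id)
next
  case (Suc n)
  have "continuous_on X (T \<circ> (T^^n))"
    by (rule continuous_on_compose) (use Suc in \<open>auto simp: tds_def intro!: continuous_on_subset[of X T] image_subsetI iter_in\<close>)
  then show ?case by (simp add: funpow_Suc_right[symmetric] comp_def)
qed

lemma iter_factor: "factor_map X T Y S p \<Longrightarrow> x \<in> X \<Longrightarrow> p ((T^^n) x) = (S^^n) (p x)"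
proof (induction n)
  case 0 then show ?case by simp
next
  case (Suc n)
  then have "(T^^n) x \<in> X" using iter_in factor_map_def by blast
  then show ?case using Suc by (simp add: factor_map_def)
qed

lemma iter_prod: fixes f :: "'a \<Rightarrow> 'a" and g :: "'b \<Rightarrow> 'b" shows "(prod_map f g ^^ n) (a, b) = ((f^^n) a, (g^^n) b)"
  by (induction n arbitrary: a b) (simp_all add: prod_map_def)

lemma core:
  assumes fm: "factor_map X2 T2 Y2 S2 p2" and pf: "proximal_factor X2 T2 p2"
    and t1: "tds X1 T1" and x1: "x1 \<in> X1" "y1 \<in> X1" and x2: "x2 \<in> X2" "y2 \<in> X2"
    and eq: "p2 x2 = p2 y2" and pp: "proximal_pair T1 x1 y1" and e: "e > 0"
  shows "\<exists>n\<ge>N. dist ((T1^^n) x1) ((T1^^n) y1) < e \<and> dist ((T2^^n) x2) ((T2^^n) y2) < e"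
proof -
  have t2: "tds X2 T2" using fm factor_map_def by blast
  have "\<forall>k. \<exists>n\<ge>N. dist ((T1^^n) x1) ((T1^^n) y1) < inverse (real (Suc k))"
    using pp[unfolded prox_iff] by simp
  then obtain r where r: "\<And>k. r k \<ge> N" "\<And>k. dist ((T1^^r k) x1) ((T1^^r k) y1) < inverse (real (Suc k))"
    by metis
  define F where "F k = ((T1^^r k) x1, (T1^^r k) y1, (T2^^r k) x2, (T2^^r k) y2)" for k
  have "compact (X1 \<times> X1 \<times> X2 \<times> X2)" using t1 t2 by (auto simp: tds_def intro!: compact_Times)
  moreover have "\<forall>k. F k \<in> X1 \<times> X1 \<times> X2 \<times> X2" using iter_in[OF t1] iter_in[OF t2] x1 x2 by (auto simp: F_def)
  ultimately obtain l s where l: "l \<in> X1 \<times> X1 \<times> X2 \<times> X2" and s: "strict_mono s" "(F \<circ> s) \<longlonglongrightarrow> l"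
    using compact_imp_seq_compact seq_compact_def by metis
  obtain z1 z1' z2 z2' where lz: "l = (z1,z1',z2,z2')" by (metis prod.exhaust)
  have zin: "z1 \<in> X1" "z1' \<in> X1" "z2 \<in> X2" "z2' \<in> X2" using l lz by auto
  have a1: "(\<lambda>j. (T1^^r (s j)) x1) \<longlonglongrightarrow> z1" using tendsto_fst[OF s(2)] by (simp add: lz F_def o_def)
  have b1: "(\<lambda>j. (T1^^r (s j)) y1) \<longlonglongrightarrow> z1'" using tendsto_fst[OF tendsto_snd[OF s(2)]] by (simp add: lz F_def o_def)
  have a2: "(\<lambda>j. (T2^^r (s j)) x2) \<longlonglongrightarrow> z2" using tendsto_fst[OF tendsto_snd[OF tendsto_snd[OF s(2)]]] by (simp add: lz F_def o_def)
  have b2: "(\<lambda>j. (T2^^r (s j)) y2) \<longlonglongrightarrow> z2'" using tendsto_snd[OF tendsto_snd[OF tendsto_snd[OF s(2)]]] by (simp add: lz F_def o_def)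
  have "(\<lambda>j. dist ((T1^^r (s j)) x1) ((T1^^r (s j)) y1)) \<longlonglongrightarrow> 0"
  proof (rule tendsto_sandwich[OF _ _ tendsto_const LIMSEQ_inverse_real_of_nat])
    show "\<forall>\<^sub>F j in sequentially. 0 \<le> dist ((T1^^r (s j)) x1) ((T1^^r (s j)) y1)" by simp
    show "\<forall>\<^sub>F j in sequentially. dist ((T1^^r (s j)) x1) ((T1^^r (s j)) y1) \<le> inverse (real (Suc j))"
    proof (rule always_eventually, rule allI)
      fix j
      have "j \<le> s j" using seq_suble[OF s(1)] by simp
      then have "inverse (real (Suc (s j))) \<le> inverse (real (Suc j))"
        by (intro le_imp_inverse_le) auto
      then show "dist ((T1^^r (s j)) x1) ((T1^^r (s j)) y1) \<le> inverse (real (Suc j))"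
        using r(2)[of "s j"] by linarith
    qed
  qed
  moreover have "(\<lambda>j. dist ((T1^^r (s j)) x1) ((T1^^r (s j)) y1)) \<longlonglongrightarrow> dist z1 z1'"
    by (intro tendsto_dist a1 b1)
  ultimately have "dist z1 z1' = 0" using LIMSEQ_unique by blast
  then have z1: "z1' = z1" by simp
  have fm': "continuous_on X2 p2" using fm factor_map_def by blast
  have ev2: "\<And>x. x \<in> X2 \<Longrightarrow> \<forall>\<^sub>F j in sequentially. (T2^^r (s j)) x \<in> X2"
    using iter_in[OF t2] by simp
  have ev1: "\<And>x. x \<in> X1 \<Longrightarrow> \<forall>\<^sub>F j in sequentially. (T1^^r (s j)) x \<in> X1"
    using iter_in[OF t1] by simp
  have "(\<lambda>j. p2 ((T2^^r (s j)) x2)) \<longlonglongrightarrow> p2 z2"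
    by (rule continuous_on_tendsto_compose[OF fm' a2 zin(3) ev2[OF x2(1)]])
  moreover have "(\<lambda>j. p2 ((T2^^r (s j)) x2)) \<longlonglongrightarrow> p2 z2'"
  proof -
    have "(\<lambda>j. p2 ((T2^^r (s j)) y2)) \<longlonglongrightarrow> p2 z2'"
      by (rule continuous_on_tendsto_compose[OF fm' b2 zin(4) ev2[OF x2(2)]])
    moreover have "p2 ((T2^^r (s j)) y2) = p2 ((T2^^r (s j)) x2)" for j
      using iter_factor[OF fm x2(1)] iter_factor[OF fm x2(2)] eq by simp
    ultimately show ?thesis by simp
  qed
  ultimately have "p2 z2 = p2 z2'" using LIMSEQ_unique by blast
  then have "proximal_pair T2 z2 z2'" using pf zin unfolding proximal_factor_def by blast
  then obtain m where m: "dist ((T2^^m) z2) ((T2^^m) z2') < e" using e unfolding prox_iff by blast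
  have c2: "(\<lambda>j. (T2^^m) ((T2^^r (s j)) x2)) \<longlonglongrightarrow> (T2^^m) z2"
    by (rule continuous_on_tendsto_compose[OF iter_cont[OF t2] a2 zin(3) ev2[OF x2(1)]])
  have d2: "(\<lambda>j. (T2^^m) ((T2^^r (s j)) y2)) \<longlonglongrightarrow> (T2^^m) z2'"
    by (rule continuous_on_tendsto_compose[OF iter_cont[OF t2] b2 zin(4) ev2[OF x2(2)]])
  have c1: "(\<lambda>j. (T1^^m) ((T1^^r (s j)) x1)) \<longlonglongrightarrow> (T1^^m) z1"
    by (rule continuous_on_tendsto_compose[OF iter_cont[OF t1] a1 zin(1) ev1[OF x1(1)]])
  have d1: "(\<lambda>j. (T1^^m) ((T1^^r (s j)) y1)) \<longlonglongrightarrow> (T1^^m) z1"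
    using continuous_on_tendsto_compose[OF iter_cont[OF t1] b1 zin(2) ev1[OF x1(2)]] z1 by simp
  have E2: "\<forall>\<^sub>F j in sequentially. dist ((T2^^m) ((T2^^r (s j)) x2)) ((T2^^m) ((T2^^r (s j)) y2)) < e"
    by (rule order_tendstoD(2)[OF tendsto_dist[OF c2 d2] m])
  have E1: "\<forall>\<^sub>F j in sequentially. dist ((T1^^m) ((T1^^r (s j)) x1)) ((T1^^m) ((T1^^r (s j)) y1)) < e"
    using order_tendstoD(2)[OF tendsto_dist[OF c1 d1], of e] e by simp
  obtain j where j: "dist ((T1^^m) ((T1^^r (s j)) x1)) ((T1^^m) ((T1^^r (s j)) y1)) < e"
    "dist ((T2^^m) ((T2^^r (s j)) x2)) ((T2^^m) ((T2^^r (s j)) y2)) < e"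
    using eventually_happens'[OF _ eventually_conj[OF E1 E2]] by auto
  show ?thesis
  proof (intro exI[of _ "m + r (s j)"] conjI)
    show "N \<le> m + r (s j)" using r(1)[of "s j"] by simp
  qed (use j in \<open>simp_all add: funpow_add\<close>)
qed

lemma prod_map_cont:
  assumes "continuous_on A f" "continuous_on B g"
  shows "continuous_on (A \<times> B) (prod_map f g)"
proof -
  have "continuous_on (A \<times> B) (\<lambda>z. (f (fst z), g (snd z)))"
    by (intro continuous_on_Pair continuous_on_compose2[OF assms(1) continuous_on_fst]
        continuous_on_compose2[OF assms(2) continuous_on_snd]) auto
  moreover have "prod_map f g = (\<lambda>z. (f (fst z), g (snd z)))"
    by (auto simp: prod_map_def)
  ultimately show ?thesis by simp
qed

lemma prod_map_image: "prod_map f g ` (A \<times> B) = f ` A \<times> g ` B"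
  by (auto simp: prod_map_def image_iff)

lemma prod_tds: "tds X1 T1 \<Longrightarrow> tds X2 T2 \<Longrightarrow> tds (X1 \<times> X2) (prod_map T1 T2)"
  unfolding tds_def by (auto intro!: compact_Times prod_map_cont simp: prod_map_image)

theorem lemma4p3:
  fixes X1 :: "'a::metric_space set" and T1 :: "'a \<Rightarrow> 'a"
    and Y1 :: "'b::metric_space set" and S1 :: "'b \<Rightarrow> 'b" and \<pi>1 :: "'a \<Rightarrow> 'b"
    and X2 :: "'c::metric_space set" and T2 :: "'c \<Rightarrow> 'c"
    and Y2 :: "'d::metric_space set" and S2 :: "'d \<Rightarrow> 'd" and \<pi>2 :: "'c \<Rightarrow> 'd"
  assumes "factor_map X1 T1 Y1 S1 \<pi>1"
    and "factor_map X2 T2 Y2 S2 \<pi>2"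
    and "proximal_factor X1 T1 \<pi>1"
    and "proximal_factor X2 T2 \<pi>2"
  shows "factor_map (X1 \<times> X2) (prod_map T1 T2) (Y1 \<times> Y2) (prod_map S1 S2) (prod_map \<pi>1 \<pi>2)
     \<and> proximal_factor (X1 \<times> X2) (prod_map T1 T2) (prod_map \<pi>1 \<pi>2)"
proof
  show "factor_map (X1 \<times> X2) (prod_map T1 T2) (Y1 \<times> Y2) (prod_map S1 S2) (prod_map \<pi>1 \<pi>2)"
    using assms(1,2) unfolding factor_map_def
    by (auto intro!: prod_tds prod_map_cont simp: prod_map_image) (auto simp: prod_map_def)
  show "proximal_factor (X1 \<times> X2) (prod_map T1 T2) (prod_map \<pi>1 \<pi>2)"
    unfolding proximal_factor_def
  proof (intro ballI impI)
    fix u v assume u: "u \<in> X1 \<times> X2" and v: "v \<in> X1 \<times> X2"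
      and uv: "prod_map \<pi>1 \<pi>2 u = prod_map \<pi>1 \<pi>2 v"
    obtain a1 a2 where ua: "u = (a1, a2)" by (cases u)
    obtain b1 b2 where vb: "v = (b1, b2)" by (cases v)
    have in1: "a1 \<in> X1" "b1 \<in> X1" and in2: "a2 \<in> X2" "b2 \<in> X2" using u v ua vb by auto
    have eq: "\<pi>1 a1 = \<pi>1 b1" "\<pi>2 a2 = \<pi>2 b2" using uv ua vb by (auto simp: prod_map_def)
    have pp: "proximal_pair T1 a1 b1" using assms(3) in1 eq unfolding proximal_factor_def by blast
    have t1: "tds X1 T1" using assms(1) factor_map_def by blast
    show "proximal_pair (prod_map T1 T2) u v"
      unfolding prox_iff
    proof (intro allI impI)
      fix e :: real and N :: nat assume e: "e > 0"
      obtain n where n: "n \<ge> N" "dist ((T1^^n) a1) ((T1^^n) b1) < e/2"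
        "dist ((T2^^n) a2) ((T2^^n) b2) < e/2"
        using core[OF assms(2,4) t1 in1 in2 eq(2) pp, of "e/2" N] e by auto
      have "dist ((prod_map T1 T2 ^^ n) u) ((prod_map T1 T2 ^^ n) v) < e"
        unfolding ua vb iter_prod dist_Pair_Pair
        by (rule sqrt_sum_squares_half_less) (use n in auto)
      then show "\<exists>n\<ge>N. dist ((prod_map T1 T2 ^^ n) u) ((prod_map T1 T2 ^^ n) v) < e"
        using n(1) by blast
    qed
  qed
qed

end
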